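(* Let $B$ be a finite set (of "bath spins"), and introduce commuting indeterminates $b_{i,j}=b_{j,i}$ for distinct $i,j\in B$. For every subset $\mathcal S\subseteq B$ let $L_{\mathcal S}$ be a formal power series in the variables $\{b_{i,j}: i,j\in\mathcal S,\ i\neq j\}$ (with complex coefficients, which may depend on additional parameters such as a time $t$) whose constant term is nonzero. Define $\tilde L_{\mathcal S}$ recursively for all $\mathcal S\subseteq B$ by $\tilde L_{\mathcal S}=L_{\mathcal S}/\prod_{\mathcal C\subsetneq \mathcal S}\tilde L_{\mathcal C}$. Suppose that for every $\mathcal S\subseteq B$ and all subsets $\mathcal X,\mathcal Y\subseteq\mathcal S$ with $\mathcal X\cup\mathcal Y=\mathcal S$ and $\mathcal X\cap\mathcal Y=\emptyset$, setting $b_{i,j}=0$ for all $i\in\mathcal X$, $j\in\mathcal Y$ in $L_{\mathcal S}$ yields $L_{\mathcal X}L_{\mathcal Y}$. Then for every $\mathcal C\subseteq B$ with $k=|\mathcal C|\ge 1$, $\tilde L_{\mathcal C}$ equals a constant plus terms of total degree at least $k-1$ in the variables $b_{i,j}$; that is, $\tilde L_{\mathcal C}=\mathrm{const}+O(b_{i,j}^{k-1})$ (in the paper's physical setting where each $b_{i,j}$ is accompanied by a factor of time $t$, $\tilde L_{\mathcal C}=\mathrm{const}+O(b_{i,j}^{k-1}t^{k-1})$).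
   Context: Quotients and products are in the ring of formal power series; they are well defined since all constant terms are nonzero. The hypothesis on setting cross couplings to zero is called "factorable under disconnected interactions". *)

theory Defs
  imports Complex_Main "HOL-Library.Poly_Mapping" "HOL-Library.FuncSet"
begin

text \<open>A monomial is a finitely supported exponent
vector (poly_mapping to nat); a series is its coefficient function.\<close>

type_synonym 'v mps = "('v \<Rightarrow>\<^sub>0 nat) \<Rightarrow> complex"

definition mono_deg :: "('v \<Rightarrow>\<^sub>0 nat) \<Rightarrow> nat" where
  "mono_deg m = (\<Sum>v\<in>Poly_Mapping.keys m. Poly_Mapping.lookup m v)"

definition mps_one :: "'v mps" where
  "mps_one m = (if m = 0 then 1 else 0)"

definition mps_mult :: "'v mps \<Rightarrow> 'v mps \<Rightarrow> 'v mps" where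
  "mps_mult f g m = (\<Sum>(p, q)\<in>{(p, q). p + q = m}. f p * g q)"

definition mps_prod :: "'i set \<Rightarrow> ('i \<Rightarrow> 'v mps) \<Rightarrow> 'v mps" where
  "mps_prod I F m =
     (\<Sum>P\<in>{P. P \<in> I \<rightarrow>\<^sub>E UNIV \<and> (\<Sum>i\<in>I. P i) = m}. \<Prod>i\<in>I. F i (P i))"

text \<open>Multiplicative inverse (exists uniquely when the constant term is nonzero).\<close>
definition mps_inverse :: "'v mps \<Rightarrow> 'v mps" where
  "mps_inverse f = (THE g. mps_mult f g = mps_one)"

definition mps_div :: "'v mps \<Rightarrow> 'v mps \<Rightarrow> 'v mps" where
  "mps_div f g = mps_mult f (mps_inverse g)"

definition mps_zero_vars :: "'v set \<Rightarrow> 'v mps \<Rightarrow> 'v mps" where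
  "mps_zero_vars V f m = (if Poly_Mapping.keys m \<inter> V = {} then f m else 0)"

text \<open>Coupling variables b_ij = b_ji, i \<noteq> j, are indexed by two-element sets.\<close>
definition pair_vars :: "'a set \<Rightarrow> 'a set set" where
  "pair_vars S = {e. e \<subseteq> S \<and> card e = 2}"

definition cross_vars :: "'a set \<Rightarrow> 'a set \<Rightarrow> 'a set set" where
  "cross_vars X Y = {{i, j} | i j. i \<in> X \<and> j \<in> Y \<and> i \<noteq> j}"

definition mps_vars_in :: "'v set \<Rightarrow> 'v mps \<Rightarrow> bool" where
  "mps_vars_in V f \<longleftrightarrow> (\<forall>m. f m \<noteq> 0 \<longrightarrow> Poly_Mapping.keys m \<subseteq> V)"

end

theory Submission
  imports Defs
begin

definition dset :: "('v \<Rightarrow>\<^sub>0 nat) \<Rightarrow> ('v \<Rightarrow>\<^sub>0 nat) set" where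
  "dset m = {p. \<forall>v. Poly_Mapping.lookup p v \<le> Poly_Mapping.lookup m v}"

lemma keys_add_nat: "Poly_Mapping.keys ((p::'v \<Rightarrow>\<^sub>0 nat) + q) = Poly_Mapping.keys p \<union> Poly_Mapping.keys q"
  by (auto simp: in_keys_iff lookup_add)

lemma add_in_dset: "p + q = m \<Longrightarrow> p \<in> dset m \<and> q \<in> dset m"
  by (auto simp: dset_def lookup_add)

lemma mono_deg_alt: "finite K \<Longrightarrow> Poly_Mapping.keys m \<subseteq> K \<Longrightarrow> mono_deg m = (\<Sum>v\<in>K. Poly_Mapping.lookup m v)"
  unfolding mono_deg_def
  by (rule sum.mono_neutral_left) (auto simp: in_keys_iff)

lemma mono_deg_add: "mono_deg ((p::'v \<Rightarrow>\<^sub>0 nat) + q) = mono_deg p + mono_deg q"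
proof -
  have "mono_deg (p+q) = (\<Sum>v\<in>Poly_Mapping.keys p \<union> Poly_Mapping.keys q. Poly_Mapping.lookup (p+q) v)"
    by (rule mono_deg_alt) (auto simp: keys_add_nat)
  also have "\<dots> = (\<Sum>v\<in>Poly_Mapping.keys p \<union> Poly_Mapping.keys q. Poly_Mapping.lookup p v) + (\<Sum>v\<in>Poly_Mapping.keys p \<union> Poly_Mapping.keys q. Poly_Mapping.lookup q v)"
    by (simp add: lookup_add sum.distrib)
  also have "\<dots> = mono_deg p + mono_deg q"
    using mono_deg_alt[of "Poly_Mapping.keys p \<union> Poly_Mapping.keys q" p] mono_deg_alt[of "Poly_Mapping.keys p \<union> Poly_Mapping.keys q" q] by simp
  finally show ?thesis .
qed

lemma mono_deg_pos: "m \<noteq> 0 \<Longrightarrow> mono_deg (m::'v \<Rightarrow>\<^sub>0 nat) > 0"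
proof -
  assume "m \<noteq> 0"
  then obtain v where v: "v \<in> Poly_Mapping.keys m" by (metis keys_eq_empty ex_in_conv)
  then have "Poly_Mapping.lookup m v \<le> mono_deg m" unfolding mono_deg_def
    by (intro member_le_sum) auto
  with v show ?thesis by (simp add: in_keys_iff)
qed

lemma card_keys_le: "card (Poly_Mapping.keys m) \<le> mono_deg m"
proof -
  have "card (Poly_Mapping.keys m) = (\<Sum>v\<in>Poly_Mapping.keys m. 1)" by simp
  also have "\<dots> \<le> mono_deg m" unfolding mono_deg_def
    by (rule sum_mono) (auto simp: in_keys_iff)
  finally show ?thesis .
qed

lemma finite_dset: "finite (dset m)"
proof -
  let ?S = "{f. \<forall>x. (x \<in> Poly_Mapping.keys m \<longrightarrow> f x \<in> {..mono_deg m}) \<and> (x \<notin> Poly_Mapping.keys m \<longrightarrow> f x = (0::nat))}"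
  have fin: "finite ?S" by (rule finite_set_of_finite_funs) auto
  have "Poly_Mapping.lookup ` dset m \<subseteq> ?S"
  proof
    fix f assume "f \<in> Poly_Mapping.lookup ` dset m"
    then obtain p where p: "p \<in> dset m" "f = Poly_Mapping.lookup p" by auto
    show "f \<in> ?S"
    proof (clarsimp, intro conjI allI impI)
      fix x assume "x \<in> Poly_Mapping.keys m"
      then have "Poly_Mapping.lookup m x \<le> mono_deg m" unfolding mono_deg_def by (intro member_le_sum) auto
      then show "f x \<le> mono_deg m" using p by (auto simp: dset_def intro: le_trans)
    next
      fix x assume "x \<notin> Poly_Mapping.keys m"
      then have "Poly_Mapping.lookup m x = 0" by (simp add: in_keys_iff)
      with p show "f x = 0" unfolding dset_def by (metis le_zero_eq mem_Collect_eq)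
    qed
  qed
  then have "finite (Poly_Mapping.lookup ` dset m)" using fin finite_subset by blast
  moreover have "inj_on Poly_Mapping.lookup (dset m)" by (simp add: inj_on_def)
  ultimately show ?thesis using finite_imageD by blast
qed

lemma finite_decomp: "finite {(p, q). p + q = (m::'v \<Rightarrow>\<^sub>0 nat)}"
  by (rule finite_subset[of _ "dset m \<times> dset m"]) (auto simp: finite_dset add_in_dset)

lemma mult_alt: "mps_mult f g m = (\<Sum>p\<in>dset m. \<Sum>q\<in>dset m. if p + q = m then f p * g q else 0)"
proof -
  have "mps_mult f g m = (\<Sum>x\<in>dset m \<times> dset m. if fst x + snd x = m then f (fst x) * g (snd x) else 0)"
    unfolding mps_mult_def
    by (rule sum.mono_neutral_cong_left) (auto simp: finite_dset add_in_dset)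
  then show ?thesis by (simp add: sum.cartesian_product case_prod_beta)
qed

definition pairs :: "('v \<Rightarrow>\<^sub>0 nat) \<Rightarrow> (('v \<Rightarrow>\<^sub>0 nat) \<times> ('v \<Rightarrow>\<^sub>0 nat)) set" where
  "pairs m = {(p, q). p + q = m}"

lemma mem_pairs [simp]: "x \<in> pairs m \<longleftrightarrow> fst x + snd x = m"
  by (cases x) (simp add: pairs_def)

lemma finite_pairs: "finite (pairs m)"
  using finite_decomp[of m] unfolding pairs_def .

lemma mult_fs: "mps_mult f g m = (\<Sum>x\<in>pairs m. f (fst x) * g (snd x))"
  unfolding mps_mult_def pairs_def by (auto intro!: sum.cong)

definition triples :: "('v \<Rightarrow>\<^sub>0 nat) \<Rightarrow> (('v \<Rightarrow>\<^sub>0 nat) \<times> ('v \<Rightarrow>\<^sub>0 nat) \<times> ('v \<Rightarrow>\<^sub>0 nat)) set" where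
  "triples m = {x. fst x + fst (snd x) + snd (snd x) = m}"

lemma mult_assoc1: "mps_mult (mps_mult f g) h m =
   (\<Sum>x\<in>triples m. f (fst x) * g (fst (snd x)) * h (snd (snd x)))"
proof -
  have "mps_mult (mps_mult f g) h m = (\<Sum>x\<in>pairs m. \<Sum>y\<in>pairs (fst x). f (fst y) * g (snd y) * h (snd x))"
    by (simp add: mult_fs sum_distrib_right)
  also have "\<dots> = (\<Sum>z\<in>Sigma (pairs m) (\<lambda>x. pairs (fst x)). f (fst (snd z)) * g (snd (snd z)) * h (snd (fst z)))"
    by (subst sum.Sigma) (auto simp: finite_pairs case_prod_beta)
  also have "\<dots> = (\<Sum>x\<in>triples m. f (fst x) * g (fst (snd x)) * h (snd (snd x)))"
    by (rule sum.reindex_bij_witness[where i = "\<lambda>x. ((fst x + fst (snd x), snd (snd x)), (fst x, fst (snd x)))"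
          and j = "\<lambda>z. (fst (snd z), snd (snd z), snd (fst z))"])
       (auto simp: pairs_def triples_def)
  finally show ?thesis .
qed

lemma mult_assoc2: "mps_mult f (mps_mult g h) m =
   (\<Sum>x\<in>triples m. f (fst x) * g (fst (snd x)) * h (snd (snd x)))"
proof -
  have "mps_mult f (mps_mult g h) m = (\<Sum>x\<in>pairs m. \<Sum>y\<in>pairs (snd x). f (fst x) * g (fst y) * h (snd y))"
    by (simp add: mult_fs sum_distrib_left mult.assoc)
  also have "\<dots> = (\<Sum>z\<in>Sigma (pairs m) (\<lambda>x. pairs (snd x)). f (fst (fst z)) * g (fst (snd z)) * h (snd (snd z)))"
    by (subst sum.Sigma) (auto simp: finite_pairs case_prod_beta)
  also have "\<dots> = (\<Sum>x\<in>triples m. f (fst x) * g (fst (snd x)) * h (snd (snd x)))"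
    by (rule sum.reindex_bij_witness[where i = "\<lambda>x. ((fst x, fst (snd x) + snd (snd x)), (fst (snd x), snd (snd x)))"
          and j = "\<lambda>z. (fst (fst z), fst (snd z), snd (snd z))"])
       (auto simp: pairs_def triples_def add.assoc)
  finally show ?thesis .
qed

lemma mps_mult_assoc: "mps_mult (mps_mult f g) h = mps_mult f (mps_mult g h)"
  by (rule ext) (simp add: mult_assoc1 mult_assoc2)

lemma mps_mult_comm: "mps_mult f g = mps_mult g f"
proof (rule ext)
  fix m
  show "mps_mult f g m = mps_mult g f m"
    unfolding mult_fs
    by (rule sum.reindex_bij_witness[where i = "\<lambda>x. (snd x, fst x)" and j = "\<lambda>x. (snd x, fst x)"])
       (auto simp: pairs_def add.commute)
qed

lemma mps_mult_one: "mps_mult f mps_one = f"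
proof (rule ext)
  fix m
  have "mps_mult f mps_one m = (\<Sum>x\<in>pairs m. if x = (m, 0) then f m else 0)"
    unfolding mult_fs by (rule sum.cong) (auto simp: mps_one_def pairs_def)
  also have "\<dots> = f m" by (simp add: sum.delta[OF finite_pairs])
  finally show "mps_mult f mps_one m = f m" .
qed

interpretation mp: comm_monoid_set mps_mult mps_one
  by unfold_locales (metis mps_mult_assoc mps_mult_comm mps_mult_one)+

lemma mps_mult_lcomm: "mps_mult a (mps_mult b c) = mps_mult b (mps_mult a c)"
  by (metis mps_mult_assoc mps_mult_comm)

lemmas mps_ac = mps_mult_assoc mps_mult_comm mps_mult_lcomm

definition Qs :: "'i set \<Rightarrow> ('v \<Rightarrow>\<^sub>0 nat) \<Rightarrow> ('i \<Rightarrow> ('v \<Rightarrow>\<^sub>0 nat)) set" where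
  "Qs I m = {P. P \<in> I \<rightarrow>\<^sub>E UNIV \<and> (\<Sum>i\<in>I. P i) = m}"

lemma prod_Qs: "mps_prod I F m = (\<Sum>P\<in>Qs I m. \<Prod>i\<in>I. F i (P i))"
  unfolding mps_prod_def Qs_def ..

lemma finite_Qs: assumes "finite I" shows "finite (Qs I m)"
proof (rule finite_subset)
  show "Qs I m \<subseteq> PiE I (\<lambda>_. dset m)"
  proof
    fix P assume P: "P \<in> Qs I m"
    show "P \<in> PiE I (\<lambda>_. dset m)"
    proof (rule PiE_I)
      fix j assume j: "j \<in> I"
      show "P j \<in> dset m" unfolding dset_def
      proof (intro CollectI allI)
        fix v
        have "Poly_Mapping.lookup (P j) v \<le> (\<Sum>k\<in>I. Poly_Mapping.lookup (P k) v)"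
          using assms j by (intro member_le_sum) auto
        also have "\<dots> = Poly_Mapping.lookup m v"
        proof -
          from P have "m = (\<Sum>i\<in>I. P i)" by (simp add: Qs_def)
          then show ?thesis by (simp add: lookup_sum)
        qed
        finally show "Poly_Mapping.lookup (P j) v \<le> Poly_Mapping.lookup m v" .
      qed
    next
      fix j assume "j \<notin> I" then show "P j = undefined" using P by (auto simp: Qs_def PiE_def extensional_def)
    qed
  qed
  show "finite (PiE I (\<lambda>_. dset m))" using assms by (simp add: finite_PiE finite_dset)
qed

lemma mps_prod_empty: "mps_prod {} (F :: 'i \<Rightarrow> 'v mps) = mps_one"
proof (rule ext)
  fix m :: "'v \<Rightarrow>\<^sub>0 nat"
  have "Qs ({}::'i set) m = (if m = 0 then {\<lambda>_. undefined} else {})" by (auto simp: Qs_def)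
  then show "mps_prod {} F m = mps_one m" by (simp add: prod_Qs mps_one_def)
qed

lemma mps_prod_insert:
  fixes F :: "'i \<Rightarrow> 'v mps"
  assumes fin: "finite I" and i: "i \<notin> I"
  shows "mps_prod (insert i I) F = mps_mult (F i) (mps_prod I F)"
proof (rule ext)
  fix m :: "'v \<Rightarrow>\<^sub>0 nat"
  have "mps_mult (F i) (mps_prod I F) m =
      (\<Sum>x\<in>pairs m. \<Sum>P\<in>Qs I (snd x). F i (fst x) * (\<Prod>j\<in>I. F j (P j)))"
    by (simp add: mult_fs prod_Qs sum_distrib_left)
  also have "\<dots> = (\<Sum>z\<in>Sigma (pairs m) (\<lambda>x. Qs I (snd x)). F i (fst (fst z)) * (\<Prod>j\<in>I. F j (snd z j)))"
    by (subst sum.Sigma) (auto simp: finite_pairs finite_Qs fin case_prod_beta)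
  also have "\<dots> = mps_prod (insert i I) F m"
    unfolding prod_Qs
  proof (rule sum.reindex_bij_witness[where i = "\<lambda>P. ((P i, \<Sum>j\<in>I. P j), restrict P I)"
          and j = "\<lambda>z. (snd z)(i := fst (fst z))"])
    fix z assume z: "z \<in> Sigma (pairs m) (\<lambda>x. Qs I (snd x))"
    then have ext: "snd z \<in> I \<rightarrow>\<^sub>E UNIV" and s: "(\<Sum>j\<in>I. snd z j) = snd (fst z)"
      and pm: "fst (fst z) + snd (fst z) = m"
      by (auto simp: Qs_def)
    have r: "restrict ((snd z)(i := fst (fst z))) I = snd z"
      using ext i by (auto simp: restrict_def fun_eq_iff PiE_def extensional_def)
    have s2: "(\<Sum>j\<in>I. ((snd z)(i := fst (fst z))) j) = (\<Sum>j\<in>I. snd z j)"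
      using i by (intro sum.cong) auto
    show "((((snd z)(i := fst (fst z))) i, \<Sum>j\<in>I. ((snd z)(i := fst (fst z))) j),
           restrict ((snd z)(i := fst (fst z))) I) = z"
      using r s2 s by (cases z) auto
    show "(snd z)(i := fst (fst z)) \<in> Qs (insert i I) m"
      using ext s pm s2 fin i by (auto simp: Qs_def PiE_def extensional_def)
    show "(\<Prod>ia\<in>insert i I. F ia (((snd z)(i := fst (fst z))) ia)) =
          F i (fst (fst z)) * (\<Prod>j\<in>I. F j (snd z j))"
    proof -
      have "(\<Prod>j\<in>I. F j (((snd z)(i := fst (fst z))) j)) = (\<Prod>j\<in>I. F j (snd z j))"
        using i by (intro prod.cong) auto
      then show ?thesis using fin i by simp
    qed
  next
    fix P assume P: "P \<in> Qs (insert i I) m"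
    then have ext: "P \<in> insert i I \<rightarrow>\<^sub>E UNIV" and s: "(\<Sum>j\<in>insert i I. P j) = m"
      by (auto simp: Qs_def)
    show "(snd ((P i, \<Sum>j\<in>I. P j), restrict P I))(i := fst (fst ((P i, \<Sum>j\<in>I. P j), restrict P I))) = P"
      using ext by (auto simp: restrict_def fun_eq_iff PiE_def extensional_def)
    have "(\<Sum>j\<in>I. restrict P I j) = (\<Sum>j\<in>I. P j)" by (intro sum.cong) auto
    then show "((P i, \<Sum>j\<in>I. P j), restrict P I) \<in> Sigma (pairs m) (\<lambda>x. Qs I (snd x))"
      using s fin i by (auto simp: Qs_def)
  qed
  finally show "mps_prod (insert i I) F m = mps_mult (F i) (mps_prod I F) m" ..
qed

lemma mps_prod_F: "finite I \<Longrightarrow> mps_prod I F = mp.F F I"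
proof (induction I rule: finite_induct)
  case empty then show ?case by (simp add: mps_prod_empty)
next
  case (insert i I) then show ?case by (simp add: mps_prod_insert)
qed

function inv_rec :: "'v mps \<Rightarrow> ('v \<Rightarrow>\<^sub>0 nat) \<Rightarrow> complex" where
  "inv_rec g m = (if m = 0 then 1 / g 0
     else - (\<Sum>x\<in>{x \<in> pairs m. fst x \<noteq> 0}. g (fst x) * inv_rec g (snd x)) / g 0)"
  by pat_completeness auto
termination
proof (relation "measure (\<lambda>(g, m). mono_deg m)")
  fix g :: "'v mps" and m x
  assume "x \<in> {x \<in> pairs m. fst x \<noteq> 0}"
  then have "m = fst x + snd x" "fst x \<noteq> 0" by auto
  then show "((g, snd x), g, m) \<in> measure (\<lambda>(g, m). mono_deg m)"
    using mono_deg_pos[of "fst x"] by (simp add: mono_deg_add)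
qed auto

declare inv_rec.simps[simp del]

lemma pairs_split: "pairs m - {(0, m)} = {x \<in> pairs m. fst x \<noteq> 0}"
  by auto

lemma add_eq0: assumes h: "(p::'v \<Rightarrow>\<^sub>0 nat) + q = 0" shows "p = 0"
proof (rule poly_mapping_eqI)
  fix k
  from h have "Poly_Mapping.lookup (p + q) k = 0" by simp
  then show "Poly_Mapping.lookup p k = Poly_Mapping.lookup 0 k" by (simp add: lookup_add)
qed

lemma add_eq0': "(p::'v \<Rightarrow>\<^sub>0 nat) + q = 0 \<Longrightarrow> q = 0"
  using add_eq0[of q p] by (simp add: add.commute)

lemma inv_rec_mult: fixes g :: "'v mps" assumes g0: "g 0 \<noteq> 0" shows "mps_mult g (inv_rec g) = mps_one"
proof (rule ext)
  fix m :: "'v \<Rightarrow>\<^sub>0 nat"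
  have in0: "(0, m) \<in> pairs m" by simp
  have "mps_mult g (inv_rec g) m = g 0 * inv_rec g m +
      (\<Sum>x\<in>{x \<in> pairs m. fst x \<noteq> 0}. g (fst x) * inv_rec g (snd x))"
    unfolding mult_fs by (subst sum.remove[OF finite_pairs in0]) (simp add: pairs_split)
  also have "\<dots> = mps_one m"
  proof (cases "m = 0")
    case True
    have e: "{x \<in> pairs (0::'v\<Rightarrow>\<^sub>0 nat). fst x \<noteq> 0} = {}" by (auto dest: add_eq0)
    show ?thesis unfolding True by (subst inv_rec.simps) (simp only: e sum.empty, simp add: g0 mps_one_def)
  next
    case False
    then show ?thesis using g0 by (subst inv_rec.simps) (simp add: mps_one_def)
  qed
  finally show "mps_mult g (inv_rec g) m = mps_one m" .
qed

lemma inverse_unique: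
  assumes "mps_mult g h = mps_one" "mps_mult g h' = mps_one"
  shows "h = h'"
proof -
  have "h = mps_mult h (mps_mult g h')" using assms by (simp add: mps_mult_one)
  also have "\<dots> = mps_mult (mps_mult g h) h'" by (metis mps_mult_assoc mps_mult_comm)
  also have "\<dots> = h'" using assms by (metis mps_mult_comm mps_mult_one)
  finally show ?thesis .
qed

lemma mps_inverse_eq: "g 0 \<noteq> 0 \<Longrightarrow> mps_inverse g = inv_rec g"
  unfolding mps_inverse_def
  by (rule the_equality) (auto intro: inv_rec_mult inverse_unique dest: inverse_unique[OF inv_rec_mult])

lemma mult_inverse: "g 0 \<noteq> 0 \<Longrightarrow> mps_mult g (mps_inverse g) = mps_one"
  by (simp add: mps_inverse_eq inv_rec_mult)

lemma mult_at0: "mps_mult f g 0 = f 0 * g 0"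
proof -
  have "pairs (0::'a \<Rightarrow>\<^sub>0 nat) = {(0, 0)}" by (auto dest: add_eq0 add_eq0')
  then show ?thesis by (simp add: mult_fs)
qed

lemma F_at0: "finite I \<Longrightarrow> mp.F F I 0 = (\<Prod>i\<in>I. F i 0)"
  by (induction I rule: finite_induct) (auto simp: mult_at0 mps_one_def)

lemma zv_mult: "mps_zero_vars V (mps_mult f g) = mps_mult (mps_zero_vars V f) (mps_zero_vars V g)"
proof (rule ext)
  fix m
  show "mps_zero_vars V (mps_mult f g) m = mps_mult (mps_zero_vars V f) (mps_zero_vars V g) m"
  proof (cases "Poly_Mapping.keys m \<inter> V = {}")
    case True
    have "mps_mult f g m = mps_mult (mps_zero_vars V f) (mps_zero_vars V g) m"
      unfolding mult_fs
    proof (rule sum.cong[OF refl])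
      fix x assume "x \<in> pairs m"
      then have "m = fst x + snd x" by simp
      then have "Poly_Mapping.keys (fst x) \<inter> V = {}" "Poly_Mapping.keys (snd x) \<inter> V = {}"
        using True by (auto simp: keys_add_nat)
      then show "f (fst x) * g (snd x) = mps_zero_vars V f (fst x) * mps_zero_vars V g (snd x)"
        by (simp add: mps_zero_vars_def)
    qed
    then show ?thesis using True by (simp add: mps_zero_vars_def)
  next
    case False
    have "mps_mult (mps_zero_vars V f) (mps_zero_vars V g) m = 0"
      unfolding mult_fs
    proof (rule sum.neutral, rule ballI)
      fix x assume "x \<in> pairs m"
      then have "m = fst x + snd x" by simp
      then have "Poly_Mapping.keys (fst x) \<inter> V \<noteq> {} \<or> Poly_Mapping.keys (snd x) \<inter> V \<noteq> {}"
        using False by (auto simp: keys_add_nat)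
      then show "mps_zero_vars V f (fst x) * mps_zero_vars V g (snd x) = 0"
        by (auto simp: mps_zero_vars_def)
    qed
    then show ?thesis using False by (simp add: mps_zero_vars_def)
  qed
qed

lemma zv_one: "mps_zero_vars V mps_one = mps_one"
  by (rule ext) (simp add: mps_zero_vars_def mps_one_def)

lemma zv_F: "finite I \<Longrightarrow> mps_zero_vars V (mp.F F I) = mp.F (\<lambda>i. mps_zero_vars V (F i)) I"
  by (induction I rule: finite_induct) (auto simp: zv_one zv_mult)

lemma vars_mult:
  assumes f: "mps_vars_in V f" and g: "mps_vars_in V g"
  shows "mps_vars_in V (mps_mult f g)"
  unfolding mps_vars_in_def
proof (intro allI impI)
  fix m assume nz: "mps_mult f g m \<noteq> 0"
  show "Poly_Mapping.keys m \<subseteq> V"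
  proof (rule ccontr)
    assume nk: "\<not> Poly_Mapping.keys m \<subseteq> V"
    have "mps_mult f g m = 0" unfolding mult_fs
    proof (rule sum.neutral, rule ballI)
      fix x assume "x \<in> pairs m"
      then have "m = fst x + snd x" by simp
      then have "\<not> Poly_Mapping.keys (fst x) \<subseteq> V \<or> \<not> Poly_Mapping.keys (snd x) \<subseteq> V"
        using nk by (auto simp: keys_add_nat)
      then show "f (fst x) * g (snd x) = 0" using f g unfolding mps_vars_in_def by auto
    qed
    with nz show False by simp
  qed
qed

lemma vars_one: "mps_vars_in V mps_one"
  by (simp add: mps_vars_in_def mps_one_def)

lemma vars_F: "finite I \<Longrightarrow> (\<And>i. i \<in> I \<Longrightarrow> mps_vars_in V (F i)) \<Longrightarrow> mps_vars_in V (mp.F F I)"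
  by (induction I rule: finite_induct) (auto simp: vars_one vars_mult)

lemma vars_mono: "mps_vars_in V f \<Longrightarrow> V \<subseteq> W \<Longrightarrow> mps_vars_in W f"
  by (auto simp: mps_vars_in_def)

lemma vars_zv: "mps_vars_in V f \<longleftrightarrow> mps_zero_vars (- V) f = f"
  by (auto simp: mps_vars_in_def mps_zero_vars_def fun_eq_iff)

lemma vars_inverse:
  assumes g: "mps_vars_in V g" and g0: "g 0 \<noteq> 0"
  shows "mps_vars_in V (mps_inverse g)"
proof -
  have zg: "mps_zero_vars (- V) g = g" using g by (simp add: vars_zv)
  have "mps_mult g (mps_zero_vars (- V) (mps_inverse g)) = mps_one"
    using zv_mult[of "- V" g "mps_inverse g"] zg mult_inverse[of g, OF g0] zv_one by metis
  then have "mps_zero_vars (- V) (mps_inverse g) = mps_inverse g"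
    using inverse_unique mult_inverse[of g, OF g0] by blast
  then show ?thesis by (simp add: vars_zv)
qed

lemma zv_id: "mps_vars_in V f \<Longrightarrow> W \<inter> V = {} \<Longrightarrow> mps_zero_vars W f = f"
  by (auto simp: mps_vars_in_def mps_zero_vars_def fun_eq_iff)

lemma zv_eq: assumes "mps_vars_in V f" "W \<inter> V = W' \<inter> V" shows "mps_zero_vars W f = mps_zero_vars W' f"
proof (rule ext)
  fix x
  show "mps_zero_vars W f x = mps_zero_vars W' f x"
  proof (cases "f x = 0")
    case True then show ?thesis by (simp add: mps_zero_vars_def)
  next
    case False
    then have "Poly_Mapping.keys x \<subseteq> V" using assms(1) by (auto simp: mps_vars_in_def)
    then have "Poly_Mapping.keys x \<inter> W = Poly_Mapping.keys x \<inter> W'" using assms(2) by blast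
    then show ?thesis by (simp add: mps_zero_vars_def)
  qed
qed

definition isconst :: "'v mps \<Rightarrow> bool" where
  "isconst f \<longleftrightarrow> (\<forall>m. m \<noteq> 0 \<longrightarrow> f m = 0)"

lemma isconst_mult_left: assumes "isconst f" shows "mps_mult f g m = f 0 * g m"
proof -
  have in0: "(0, m) \<in> pairs m" by simp
  have "mps_mult f g m = f 0 * g m + (\<Sum>x\<in>pairs m - {(0, m)}. f (fst x) * g (snd x))"
    unfolding mult_fs by (subst sum.remove[OF finite_pairs in0]) simp
  also have "(\<Sum>x\<in>pairs m - {(0, m)}. f (fst x) * g (snd x)) = 0"
  proof (rule sum.neutral, rule ballI)
    fix x assume x: "x \<in> pairs m - {(0, m)}"
    show "f (fst x) * g (snd x) = 0"
    proof (cases "fst x = 0")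
      case True
      with x have "x = (0, m)" by (cases x) auto
      with x show ?thesis by simp
    next
      case False then show ?thesis using assms by (simp add: isconst_def)
    qed
  qed
  finally show ?thesis by simp
qed

lemma isconst_mult: "isconst f \<Longrightarrow> isconst g \<Longrightarrow> isconst (mps_mult f g)"
  by (simp add: isconst_def isconst_mult_left)

lemma isconst_one: "isconst mps_one"
  by (simp add: isconst_def mps_one_def)

lemma isconst_F: "finite I \<Longrightarrow> (\<And>i. i \<in> I \<Longrightarrow> isconst (F i)) \<Longrightarrow> isconst (mp.F F I)"
  by (induction I rule: finite_induct) (auto simp: isconst_one isconst_mult)

lemma graph_lemma:
  assumes finC: "finite C" and finE: "finite E" and ne: "C \<noteq> {}"
    and conn: "\<And>X Y. X \<union> Y = C \<Longrightarrow> X \<inter> Y = {} \<Longrightarrow> X \<noteq> {} \<Longrightarrow> Y \<noteq> {} \<Longrightarrow> E \<inter> cross_vars X Y \<noteq> {}"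
  shows "card C - 1 \<le> card E"
proof -
  obtain v where v: "v \<in> C" using ne by blast
  have claim: "k < card C \<Longrightarrow> \<exists>T F. T \<subseteq> C \<and> card T = Suc k \<and> F \<subseteq> E \<and> card F = k \<and> (\<forall>e\<in>F. e \<subseteq> T)" for k
  proof (induction k)
    case 0
    then show ?case using v by (intro exI[of _ "{v}"] exI[of _ "{}"]) auto
  next
    case (Suc k)
    then obtain T F where TF: "T \<subseteq> C" "card T = Suc k" "F \<subseteq> E" "card F = k" "\<forall>e\<in>F. e \<subseteq> T"
      by auto
    have finT: "finite T" using TF(1) finC finite_subset by blast
    have finF: "finite F" using TF(3) finE finite_subset by blast
    have "T \<noteq> C" using TF(2) Suc.prems by auto
    then have Y: "C - T \<noteq> {}" using TF(1) by blast
    have X: "T \<noteq> {}" using TF(2) by auto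
    have "E \<inter> cross_vars T (C - T) \<noteq> {}"
      by (rule conn) (use TF(1) X Y in auto)
    then obtain i j where e: "{i, j} \<in> E" "i \<in> T" "j \<in> C - T" "i \<noteq> j"
      unfolding cross_vars_def by blast
    have notin: "{i, j} \<notin> F" using TF(5) e by blast
    show ?case
    proof (intro exI[of _ "insert j T"] exI[of _ "insert {i, j} F"] conjI)
      show "insert j T \<subseteq> C" using TF(1) e by auto
      show "card (insert j T) = Suc (Suc k)" using TF(2) finT e by simp
      show "insert {i, j} F \<subseteq> E" using TF(3) e by auto
      show "card (insert {i, j} F) = Suc k" using TF(4) finF notin by simp
      show "\<forall>e\<in>insert {i, j} F. e \<subseteq> insert j T" using TF(5) e by auto
    qed
  qed
  have "card C - 1 < card C" using ne finC by (simp add: card_gt_0_iff)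
  from claim[OF this] obtain F where "F \<subseteq> E" "card F = card C - 1" by blast
  then show ?thesis using card_mono[OF finE] by metis
qed

lemma pair_vars_mono: "C \<subseteq> S \<Longrightarrow> pair_vars C \<subseteq> pair_vars S"
  by (auto simp: pair_vars_def)

lemma cross_pair: "cross_vars X Y \<inter> pair_vars C = cross_vars (C \<inter> X) (C \<inter> Y) \<inter> pair_vars C"
  unfolding cross_vars_def pair_vars_def by blast

lemma cross_pair_disj: "X \<inter> Y = {} \<Longrightarrow> C \<subseteq> X \<Longrightarrow> cross_vars X Y \<inter> pair_vars C = {}"
  unfolding cross_vars_def pair_vars_def by blast

lemma cross_pair_disj': "X \<inter> Y = {} \<Longrightarrow> C \<subseteq> Y \<Longrightarrow> cross_vars X Y \<inter> pair_vars C = {}"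
  unfolding cross_vars_def pair_vars_def by blast

lemma inv_one: "mps_inverse mps_one = mps_one"
  using inverse_unique[of mps_one "mps_inverse mps_one" mps_one] mult_inverse[of mps_one]
  by (simp add: mps_mult_one mps_one_def)

lemma zv_empty: "mps_zero_vars {} f = f"
  by (rule ext) (simp add: mps_zero_vars_def)

theorem theorem1:
  fixes B :: "'a set"
    and L Lt :: "'a set \<Rightarrow> 'a set mps"
  assumes finB: "finite B"
    and vars: "\<And>S. S \<subseteq> B \<Longrightarrow> mps_vars_in (pair_vars S) (L S)"
    and const: "\<And>S. S \<subseteq> B \<Longrightarrow> L S 0 \<noteq> 0"
    and Lt_def: "\<And>S. S \<subseteq> B \<Longrightarrow> Lt S = mps_div (L S) (mps_prod {C. C \<subset> S} Lt)"
    and factor: "\<And>S X Y. S \<subseteq> B \<Longrightarrow> X \<union> Y = S \<Longrightarrow> X \<inter> Y = {} \<Longrightarrow>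
                   mps_zero_vars (cross_vars X Y) (L S) = mps_mult (L X) (L Y)"
  shows "\<And>C. C \<subseteq> B \<Longrightarrow> card C \<ge> 1 \<Longrightarrow>
           \<forall>m. m \<noteq> 0 \<longrightarrow> Lt C m \<noteq> 0 \<longrightarrow> card C - 1 \<le> mono_deg m"
proof -
  have finS: "finite S" if "S \<subseteq> B" for S by (rule finite_subset[OF that finB])
  have finPS: "finite {C. C \<subset> S}" if "S \<subseteq> B" for S
  proof -
    have "finite (Pow S)" using finS[OF that] by simp
    then show ?thesis by (rule finite_subset[rotated]) auto
  qed
  have L0: "L {} = mps_one"
  proof -
    have F0: "mps_zero_vars (cross_vars {} {}) (L {}) = mps_mult (L {}) (L {})" by (rule factor) auto
    have ce: "cross_vars {} {} = ({} :: 'a set set)" by (simp add: cross_vars_def)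
    have LL: "L {} = mps_mult (L {}) (L {})" using F0 unfolding ce zv_empty .
    have inv: "mps_mult (L {}) (mps_inverse (L {})) = mps_one"
      using mult_inverse const[of "{}"] by blast
    have "mps_one = mps_mult (mps_mult (L {}) (L {})) (mps_inverse (L {}))"
      using inv by (simp only: LL[symmetric])
    also have "\<dots> = L {}" using inv by (simp add: mps_mult_assoc mps_mult_one)
    finally show ?thesis by simp
  qed
  have Lt0: "Lt {} = mps_one"
    using Lt_def[of "{}"] by (simp add: mps_prod_empty mps_div_def inv_one L0 mps_mult_one)
  have dS: "L S = mp.F Lt (Pow S) \<and> mp.F Lt {C. C \<subset> S} 0 \<noteq> 0 \<and>
            Lt S = mps_mult (L S) (mps_inverse (mp.F Lt {C. C \<subset> S}))"
    if S: "S \<subseteq> B" and nz: "\<And>C. C \<subset> S \<Longrightarrow> Lt C 0 \<noteq> 0" for S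
  proof -
    let ?P = "mp.F Lt {C. C \<subset> S}"
    have P0: "?P 0 \<noteq> 0" using finPS[OF S] nz by (simp add: F_at0)
    have LtS: "Lt S = mps_mult (L S) (mps_inverse ?P)"
      using Lt_def[OF S] finPS[OF S] by (simp add: mps_div_def mps_prod_F)
    have "Pow S = insert S {C. C \<subset> S}" by auto
    then have "mp.F Lt (Pow S) = mps_mult (Lt S) ?P" using finPS[OF S] by simp
    also have "\<dots> = mps_mult (L S) (mps_mult ?P (mps_inverse ?P))"
      unfolding LtS by (simp only: mps_ac)
    also have "\<dots> = L S" using mult_inverse[of ?P, OF P0] by (simp add: mps_mult_one)
    finally show ?thesis using P0 LtS by simp
  qed
  have main: "mps_vars_in (pair_vars S) (Lt S) \<and> Lt S 0 \<noteq> 0 \<and>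
      (\<forall>X Y. X \<union> Y = S \<longrightarrow> X \<inter> Y = {} \<longrightarrow> X \<noteq> {} \<longrightarrow> Y \<noteq> {} \<longrightarrow>
         (\<forall>m. m \<noteq> 0 \<longrightarrow> mps_zero_vars (cross_vars X Y) (Lt S) m = 0))"
    if "S \<subseteq> B" for S
    using that
  proof (induction "card S" arbitrary: S rule: less_induct)
    case less
    have SB: "S \<subseteq> B" by fact
    have IH: "mps_vars_in (pair_vars T) (Lt T) \<and> Lt T 0 \<noteq> 0 \<and>
      (\<forall>X Y. X \<union> Y = T \<longrightarrow> X \<inter> Y = {} \<longrightarrow> X \<noteq> {} \<longrightarrow> Y \<noteq> {} \<longrightarrow>
         (\<forall>m. m \<noteq> 0 \<longrightarrow> mps_zero_vars (cross_vars X Y) (Lt T) m = 0))" if T: "T \<subset> S" for T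
      using less.hyps[of T] T SB psubset_card_mono[OF finS[OF SB] T] by auto
    have IHa: "mps_vars_in (pair_vars T) (Lt T)" if "T \<subset> S" for T using IH[OF that] by simp
    have nzP: "Lt T 0 \<noteq> 0" if "T \<subset> S" for T using IH[OF that] by simp
    let ?P = "mp.F Lt {C. C \<subset> S}"
    have LS: "L S = mp.F Lt (Pow S)" and P0: "?P 0 \<noteq> 0"
      and LtS: "Lt S = mps_mult (L S) (mps_inverse ?P)"
      using dS[OF SB nzP] by auto
    have invP0: "mps_inverse ?P 0 \<noteq> 0"
      using mult_inverse[of ?P, OF P0] mult_at0[of ?P "mps_inverse ?P"] by (auto simp: mps_one_def)
    have b: "Lt S 0 \<noteq> 0" using LtS invP0 const[OF SB] by (simp add: mult_at0)
    have varsP: "mps_vars_in (pair_vars S) ?P"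
    proof (rule vars_F[OF finPS[OF SB]])
      fix C assume "C \<in> {C. C \<subset> S}"
      then have C: "C \<subset> S" by simp
      show "mps_vars_in (pair_vars S) (Lt C)"
        by (rule vars_mono[OF IHa[OF C] pair_vars_mono]) (use C in auto)
    qed
    have a: "mps_vars_in (pair_vars S) (Lt S)"
      unfolding LtS by (rule vars_mult[OF vars[OF SB] vars_inverse[OF varsP P0]])
    have c: "\<forall>m. m \<noteq> 0 \<longrightarrow> mps_zero_vars (cross_vars X Y) (Lt S) m = 0"
      if XY: "X \<union> Y = S" "X \<inter> Y = {}" "X \<noteq> {}" "Y \<noteq> {}" for X Y
    proof -
      let ?W = "cross_vars X Y"
      define G where "G = (\<lambda>C. mps_zero_vars ?W (Lt C))"
      have XS: "X \<subset> S" and YS: "Y \<subset> S" using XY by auto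
      have XB: "X \<subseteq> B" and YB: "Y \<subseteq> B" using XS YS SB by auto
      have finS': "finite S" using finS[OF SB] .
      have finPow: "finite (Pow S)" using finS' by simp
      define D where "D = Pow S - (Pow X \<union> Pow Y)"
      have f1: "mps_zero_vars ?W (L S) = mps_mult (L X) (L Y)" using factor[OF SB XY(1,2)] .
      have f2: "mps_zero_vars ?W (L S) = mp.F G (Pow S)"
        unfolding LS G_def using finPow by (rule zv_F)
      have PowS: "Pow S = (Pow X \<union> Pow Y) \<union> D" using XY by (auto simp: D_def)
      have finX: "finite X" using finite_subset[OF psubset_imp_subset[OF XS] finS'] .
      have finY: "finite Y" using finite_subset[OF psubset_imp_subset[OF YS] finS'] .
      have finXY: "finite (Pow X \<union> Pow Y)" using finX finY by simp
      have finD: "finite D" using finPow by (simp add: D_def)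
      have f3: "mp.F G (Pow S) = mps_mult (mp.F G (Pow X \<union> Pow Y)) (mp.F G D)"
        unfolding PowS using finXY finD by (intro mp.union_disjoint) (auto simp: D_def)
      have XYint: "Pow X \<inter> Pow Y = {{}}" using XY(2) by auto
      have G0: "G {} = mps_one" by (simp add: G_def Lt0 zv_one)
      have f4: "mps_mult (mp.F G (Pow X \<union> Pow Y)) (mp.F G (Pow X \<inter> Pow Y)) =
                mps_mult (mp.F G (Pow X)) (mp.F G (Pow Y))"
        using finX finY by (intro mp.union_inter) auto
      have f4': "mp.F G (Pow X \<union> Pow Y) = mps_mult (mp.F G (Pow X)) (mp.F G (Pow Y))"
        using f4 unfolding XYint by (simp add: G0 mps_mult_one)
      have GX: "mp.F G (Pow X) = L X"
      proof -
        have "mp.F G (Pow X) = mp.F Lt (Pow X)"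
        proof (rule mp.cong[OF refl])
          fix C assume "C \<in> Pow X"
          then have C: "C \<subseteq> X" by simp
          then have "C \<subset> S" using XS by auto
          then have "mps_vars_in (pair_vars C) (Lt C)" by (rule IHa)
          then show "G C = Lt C" unfolding G_def
            by (rule zv_id) (rule cross_pair_disj[OF XY(2) C])
        qed
        also have "\<dots> = L X" using dS[OF XB] nzP XS by auto
        finally show ?thesis .
      qed
      have GY: "mp.F G (Pow Y) = L Y"
      proof -
        have "mp.F G (Pow Y) = mp.F Lt (Pow Y)"
        proof (rule mp.cong[OF refl])
          fix C assume "C \<in> Pow Y"
          then have C: "C \<subseteq> Y" by simp
          then have "C \<subset> S" using YS by auto
          then have "mps_vars_in (pair_vars C) (Lt C)" by (rule IHa)
          then show "G C = Lt C" unfolding G_def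
            by (rule zv_id) (rule cross_pair_disj'[OF XY(2) C])
        qed
        also have "\<dots> = L Y" using dS[OF YB] nzP YS by auto
        finally show ?thesis .
      qed
      have SD: "S \<in> D" using XY by (auto simp: D_def)
      have f5: "mp.F G D = mps_mult (G S) (mp.F G (D - {S}))"
        using finD SD by (rule mp.remove)
      define K where "K = mp.F G (D - {S})"
      have Kc: "isconst K" unfolding K_def
      proof (rule isconst_F)
        show "finite (D - {S})" using finD by simp
        fix C assume "C \<in> D - {S}"
        then have CS: "C \<subset> S" and CX: "\<not> C \<subseteq> X" and CY: "\<not> C \<subseteq> Y"
          by (auto simp: D_def)
        have IHC: "mps_vars_in (pair_vars C) (Lt C)" and
          IHc: "\<And>X' Y'. X' \<union> Y' = C \<Longrightarrow> X' \<inter> Y' = {} \<Longrightarrow> X' \<noteq> {} \<Longrightarrow> Y' \<noteq> {} \<Longrightarrow>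
             (\<forall>m. m \<noteq> 0 \<longrightarrow> mps_zero_vars (cross_vars X' Y') (Lt C) m = 0)"
          using IH[OF CS] by simp_all
        have "G C = mps_zero_vars (cross_vars (C \<inter> X) (C \<inter> Y)) (Lt C)"
          unfolding G_def using IHC cross_pair by (rule zv_eq)
        moreover have "\<forall>m. m \<noteq> 0 \<longrightarrow> mps_zero_vars (cross_vars (C \<inter> X) (C \<inter> Y)) (Lt C) m = 0"
          using CS CX CY XY by (intro IHc) auto
        ultimately show "isconst (G C)" by (simp add: isconst_def)
      qed
      define M where "M = mps_mult (L X) (L Y)"
      have M0: "M 0 \<noteq> 0" unfolding M_def using const[OF XB] const[OF YB] by (simp add: mult_at0)
      have eq: "M = mps_mult M (mps_mult (G S) K)"
        using f1 f2 f3 f4' GX GY f5 unfolding M_def K_def by simp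
      have one: "mps_mult K (G S) = mps_one"
      proof -
        have "mps_one = mps_mult M (mps_inverse M)" using mult_inverse[of M, OF M0] by simp
        also have "\<dots> = mps_mult (mps_mult M (mps_mult (G S) K)) (mps_inverse M)" using eq by simp
        also have "\<dots> = mps_mult (mps_mult (G S) K) (mps_mult M (mps_inverse M))"
          by (simp only: mps_ac)
        also have "\<dots> = mps_mult K (G S)" using mult_inverse[of M, OF M0]
          by (simp add: mps_mult_one mps_mult_comm)
        finally show ?thesis by simp
      qed
      have at: "K 0 * G S m = mps_one m" for m
        using isconst_mult_left[OF Kc, of "G S" m] one by simp
      have K0: "K 0 \<noteq> 0" using at[of 0] by (auto simp: mps_one_def)
      show ?thesis
      proof (intro allI impI)
        fix m :: "'a set \<Rightarrow>\<^sub>0 nat" assume "m \<noteq> 0"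
        then have "K 0 * G S m = 0" using at[of m] by (simp add: mps_one_def)
        then show "mps_zero_vars ?W (Lt S) m = 0" using K0 by (simp add: G_def)
      qed
    qed
    show ?case using a b c by blast
  qed
  show "\<forall>m. m \<noteq> 0 \<longrightarrow> Lt C m \<noteq> 0 \<longrightarrow> card C - 1 \<le> mono_deg m"
    if C: "C \<subseteq> B" "card C \<ge> 1" for C
  proof (intro allI impI)
    fix m assume m: "m \<noteq> 0" "Lt C m \<noteq> 0"
    have mc: "\<And>X Y. X \<union> Y = C \<Longrightarrow> X \<inter> Y = {} \<Longrightarrow> X \<noteq> {} \<Longrightarrow> Y \<noteq> {} \<Longrightarrow>
             mps_zero_vars (cross_vars X Y) (Lt C) m = 0"
      using main[OF C(1)] m(1) by blast
    have "card C - 1 \<le> card (Poly_Mapping.keys m)"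
    proof (rule graph_lemma)
      show "finite C" using finS[OF C(1)] .
      show "finite (Poly_Mapping.keys m)" by simp
      show "C \<noteq> {}" using C(2) by auto
      fix X Y assume XY: "X \<union> Y = C" "X \<inter> Y = {}" "X \<noteq> {}" "Y \<noteq> {}"
      show "Poly_Mapping.keys m \<inter> cross_vars X Y \<noteq> {}"
      proof
        assume "Poly_Mapping.keys m \<inter> cross_vars X Y = {}"
        then have "mps_zero_vars (cross_vars X Y) (Lt C) m = Lt C m" by (simp add: mps_zero_vars_def)
        with mc[OF XY] m(2) show False by simp
      qed
    qed
    also have "\<dots> \<le> mono_deg m" by (rule card_keys_le)
    finally show "card C - 1 \<le> mono_deg m" .
  qed
qed

end
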